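(* Let $A$ be a metric space and let $a:\mathbb{R}^N\times A\to S^N$, $b:\mathbb{R}^N\times A\to\mathbb{R}^N$, $c:\mathbb{R}^N\times A\to\mathbb{R}$ be continuous. For $\alpha\in A$ set $L^\alpha u:=\mathrm{tr}(a(x,\alpha)D^2u)+b(x,\alpha)\cdot Du$ and $G[u]:=\inf_{\alpha\in A}\{-L^\alpha u+c(x,\alpha)u\}$. Assume: (i) $F(x,t,p,X)=\inf_{\alpha\in A}\{-\mathrm{tr}(a(x,\alpha)X)-b(x,\alpha)\cdot p+c(x,\alpha)t\}$ is continuous on $\mathbb{R}^N\times\mathbb{R}\times\mathbb{R}^N\times S^N$, $c\ge 0$, and $G$ satisfies the Comparison Principle in every bounded open set $\Omega$: if $u,v$ are respectively a viscosity subsolution and supersolution of $G[u]=0$ in $\Omega$ with $u\le v$ on $\partial\Omega$, then $u\le v$ in $\Omega$; (ii) $G$ satisfies the Strong Maximum Principle: any viscosity subsolution of $G[u]=0$ in $\mathbb{R}^N$ that attains an interior nonnegative maximum is constant; (iii) there exist $R_o\ge0$ and a lower semicontinuous $w:\mathbb{R}^N\to\mathbb{R}$ such that $G[w]\ge0$ in the viscosity sense in $\{|x|>R_o\}$ and $\lim_{|x|\to\infty}w(x)=+\infty$. Let $u\in USC(\mathbb{R}^N)$ satisfy $G[u]\le0$ in $\mathbb{R}^N$ in the viscosity sense and $\limsup_{|x|\to\infty}\frac{u(x)}{w(x)}\le 0$. If either $u\ge0$ or $c(x,\alpha)=0$ for all $x,\alpha$, then $u$ is constant.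
   Context: $S^N$ denotes the space of real symmetric $N\times N$ matrices. Sub- and supersolutions are meant in the viscosity sense. *)

theory Defs
  imports "HOL-Analysis.Analysis"
begin

definition symmetric_mat :: "real^'n^'n \<Rightarrow> bool" where
  "symmetric_mat X \<longleftrightarrow> transpose X = X"

definition usc_on :: "(real^'n) set \<Rightarrow> (real^'n \<Rightarrow> real) \<Rightarrow> bool" where
  "usc_on S u \<longleftrightarrow> (\<forall>x\<in>S. \<forall>e>0. eventually (\<lambda>y. u y < u x + e) (at x within S))"

definition lsc_on :: "(real^'n) set \<Rightarrow> (real^'n \<Rightarrow> real) \<Rightarrow> bool" where
  "lsc_on S u \<longleftrightarrow> (\<forall>x\<in>S. \<forall>e>0. eventually (\<lambda>y. u x - e < u y) (at x within S))"

definition C2_test :: "(real^'n \<Rightarrow> real) \<Rightarrow> (real^'n \<Rightarrow> real^'n) \<Rightarrow> (real^'n \<Rightarrow> real^'n^'n) \<Rightarrow> bool" where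
  "C2_test \<phi> D\<phi> D2\<phi> \<longleftrightarrow>
     (\<forall>x. (\<phi> has_derivative (\<lambda>h. D\<phi> x \<bullet> h)) (at x)) \<and>
     (\<forall>x. (D\<phi> has_derivative (\<lambda>h. D2\<phi> x *v h)) (at x)) \<and>
     continuous_on UNIV D2\<phi>"

definition Fop :: "(real^'n \<Rightarrow> 'a \<Rightarrow> real^'n^'n) \<Rightarrow> (real^'n \<Rightarrow> 'a \<Rightarrow> real^'n) \<Rightarrow> (real^'n \<Rightarrow> 'a \<Rightarrow> real)
                   \<Rightarrow> real^'n \<Rightarrow> real \<Rightarrow> real^'n \<Rightarrow> real^'n^'n \<Rightarrow> real" where
  "Fop a b c x t p X = (INF \<alpha>. - trace (a x \<alpha> ** X) - b x \<alpha> \<bullet> p + c x \<alpha> * t)"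

definition visc_sub :: "(real^'n \<Rightarrow> 'a \<Rightarrow> real^'n^'n) \<Rightarrow> (real^'n \<Rightarrow> 'a \<Rightarrow> real^'n) \<Rightarrow> (real^'n \<Rightarrow> 'a \<Rightarrow> real)
                        \<Rightarrow> (real^'n) set \<Rightarrow> (real^'n \<Rightarrow> real) \<Rightarrow> bool" where
  "visc_sub a b c \<Omega> u \<longleftrightarrow> usc_on \<Omega> u \<and>
     (\<forall>x0\<in>\<Omega>. \<forall>\<phi> D\<phi> D2\<phi>. C2_test \<phi> D\<phi> D2\<phi> \<and>
        (\<exists>r>0. \<forall>y\<in>\<Omega> \<inter> ball x0 r. u y - \<phi> y \<le> u x0 - \<phi> x0)
        \<longrightarrow> Fop a b c x0 (u x0) (D\<phi> x0) (D2\<phi> x0) \<le> 0)"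

definition visc_super :: "(real^'n \<Rightarrow> 'a \<Rightarrow> real^'n^'n) \<Rightarrow> (real^'n \<Rightarrow> 'a \<Rightarrow> real^'n) \<Rightarrow> (real^'n \<Rightarrow> 'a \<Rightarrow> real)
                        \<Rightarrow> (real^'n) set \<Rightarrow> (real^'n \<Rightarrow> real) \<Rightarrow> bool" where
  "visc_super a b c \<Omega> v \<longleftrightarrow> lsc_on \<Omega> v \<and>
     (\<forall>x0\<in>\<Omega>. \<forall>\<phi> D\<phi> D2\<phi>. C2_test \<phi> D\<phi> D2\<phi> \<and>
        (\<exists>r>0. \<forall>y\<in>\<Omega> \<inter> ball x0 r. v y - \<phi> y \<ge> v x0 - \<phi> x0)
        \<longrightarrow> Fop a b c x0 (v x0) (D\<phi> x0) (D2\<phi> x0) \<ge> 0)"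

end

theory Submission
  imports Defs
begin

lemma usc_closed:
  assumes "usc_on UNIV u" shows "closed {x. t \<le> u x}"
proof -
  have "\<exists>T. open T \<and> x \<in> T \<and> T \<subseteq> {x. u x < t}" if x: "u x < t" for x
  proof -
    from x have "t - u x > 0" by simp
    then have "eventually (\<lambda>y. u y < u x + (t - u x)) (at x)"
      using assms unfolding usc_on_def by blast
    then obtain S where S: "open S" "x \<in> S" "\<forall>y\<in>S. y \<noteq> x \<longrightarrow> u y < t"
      unfolding eventually_at_topological by auto
    then show ?thesis using x by (intro exI[of _ S]) auto
  qed
  then have "open {x. u x < t}" by (subst open_subopen) auto
  then show ?thesis by (simp add: closed_def Compl_eq not_le[symmetric] Collect_neg_eq[symmetric])
qed

lemma usc_max:
  assumes "usc_on UNIV u" "compact K" "K \<noteq> {}"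
  shows "\<exists>x0\<in>K. \<forall>x\<in>K. u x \<le> u x0"
proof -
  let ?F = "(\<lambda>y. {x. u y \<le> u x}) ` K"
  have "K \<inter> \<Inter>?F \<noteq> {}"
  proof (rule compact_imp_fip[OF assms(2)])
    show "\<And>T. T \<in> ?F \<Longrightarrow> closed T" using usc_closed[OF assms(1)] by auto
    fix F' assume F': "finite F'" "F' \<subseteq> ?F"
    obtain Y where Y: "Y \<subseteq> K" "finite Y" "F' = (\<lambda>y. {x. u y \<le> u x}) ` Y"
      using finite_subset_image[OF F'] by blast
    show "K \<inter> \<Inter>F' \<noteq> {}"
    proof (cases "Y = {}")
      case True then show ?thesis using Y assms(3) by simp
    next
      case False
      have fin: "finite (u ` Y)" using Y(2) by simp
      have ne: "u ` Y \<noteq> {}" using False by simp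
      have "Max (u ` Y) \<in> u ` Y" using Max_in[OF fin ne] .
      then obtain y where y: "y \<in> Y" "u y = Max (u ` Y)" by (metis imageE)
      have "\<forall>z\<in>Y. u z \<le> u y" using y(2) Max_ge[OF fin] by simp
      then have "y \<in> K \<inter> \<Inter>F'" using Y y(1) by auto
      then show ?thesis by blast
    qed
  qed
  then obtain x0 where x0: "x0 \<in> K" "\<forall>T\<in>?F. x0 \<in> T" by blast
  have "\<forall>x\<in>K. u x \<le> u x0"
  proof
    fix x assume "x \<in> K"
    then have "{z. u x \<le> u z} \<in> ?F" by blast
    then show "u x \<le> u x0" using x0(2) by blast
  qed
  then show ?thesis using x0(1) by blast
qed

lemma trace_sym:
  fixes A X :: "real^'n^'n"
  assumes "symmetric_mat A"
  shows "trace (A ** X) = trace (A ** ((1/2) *\<^sub>R (X + transpose X)))"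
proof -
  have "trace (A ** transpose X) = trace (A ** X)"
  proof -
    have "trace (A ** transpose X) = trace (transpose (A ** transpose X))"
      by (simp add: trace_def transpose_def)
    also have "\<dots> = trace (X ** transpose A)" by (simp add: matrix_transpose_mul)
    also have "\<dots> = trace (X ** A)" using assms by (simp add: symmetric_mat_def)
    also have "\<dots> = trace (A ** X)" by (rule trace_mul_sym)
    finally show ?thesis .
  qed
  moreover have "trace (A ** (k *\<^sub>R Y)) = k * trace (A ** Y)" for k and Y :: "real^'n^'n"
    by (simp add: trace_def matrix_matrix_mult_def sum_distrib_left mult_ac)
  ultimately show ?thesis by (simp add: matrix_add_ldistrib trace_add)
qed

lemma trace_scale: "trace ((A::real^'n^'n) ** (k *\<^sub>R Y)) = k * trace (A ** Y)"
  by (simp add: trace_def matrix_matrix_mult_def sum_distrib_left mult_ac)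

lemma sym_half: "symmetric_mat ((1/2) *\<^sub>R (X + transpose X))"
  by (simp add: symmetric_mat_def transpose_def vec_eq_iff)

lemma usc_sub: "usc_on UNIV u \<Longrightarrow> usc_on S u"
  unfolding usc_on_def by (meson UNIV_I at_le filter_leD subset_UNIV)

lemma lsc_sub: "lsc_on UNIV u \<Longrightarrow> lsc_on S u"
  unfolding lsc_on_def by (meson UNIV_I at_le filter_leD subset_UNIV)

lemma sub_restrict:
  assumes "visc_sub a b c UNIV u" "open \<Omega>"
  shows "visc_sub a b c \<Omega> u"
  unfolding visc_sub_def
proof (intro conjI ballI allI impI)
  show "usc_on \<Omega> u" using assms(1) usc_sub unfolding visc_sub_def by blast
  fix x0 \<phi> D\<phi> D2\<phi>
  assume x0: "x0 \<in> \<Omega>" and H: "C2_test \<phi> D\<phi> D2\<phi> \<and> (\<exists>r>0. \<forall>y\<in>\<Omega> \<inter> ball x0 r. u y - \<phi> y \<le> u x0 - \<phi> x0)"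
  then obtain r where r: "r > 0" "\<forall>y\<in>\<Omega> \<inter> ball x0 r. u y - \<phi> y \<le> u x0 - \<phi> x0" by blast
  obtain r' where r': "r' > 0" "ball x0 r' \<subseteq> \<Omega>" using assms(2) x0 open_contains_ball by blast
  have "\<forall>y\<in>UNIV \<inter> ball x0 (min r r'). u y - \<phi> y \<le> u x0 - \<phi> x0"
    using r r' by auto
  moreover have "min r r' > 0" using r r' by simp
  ultimately show "Fop a b c x0 (u x0) (D\<phi> x0) (D2\<phi> x0) \<le> 0"
    using assms(1) H unfolding visc_sub_def by blast
qed

lemma sub_shift:
  assumes "\<forall>x \<alpha>. c x \<alpha> = 0" "visc_sub a b c UNIV u"
  shows "visc_sub a b c UNIV (\<lambda>x. u x - k)"
  unfolding visc_sub_def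
proof (intro conjI ballI allI impI)
  show "usc_on UNIV (\<lambda>x. u x - k)" using assms(2) unfolding visc_sub_def usc_on_def by simp
  fix x0 \<phi> D\<phi> D2\<phi>
  assume H: "C2_test \<phi> D\<phi> D2\<phi> \<and> (\<exists>r>0. \<forall>y\<in>UNIV \<inter> ball x0 r. u y - k - \<phi> y \<le> u x0 - k - \<phi> x0)"
  then have "Fop a b c x0 (u x0) (D\<phi> x0) (D2\<phi> x0) \<le> 0"
    using assms(2) unfolding visc_sub_def by auto
  then show "Fop a b c x0 (u x0 - k) (D\<phi> x0) (D2\<phi> x0) \<le> 0"
    using assms(1) by (simp add: Fop_def)
qed

lemma C2_scale:
  assumes "C2_test \<phi> D\<phi> D2\<phi>"
  shows "C2_test (\<lambda>y. e * (\<phi> y - M)) (\<lambda>y. e *\<^sub>R D\<phi> y) (\<lambda>y. e *\<^sub>R D2\<phi> y)"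
  unfolding C2_test_def
proof (intro conjI allI)
  fix x
  have "(\<phi> has_derivative (\<lambda>h. D\<phi> x \<bullet> h)) (at x)" using assms unfolding C2_test_def by blast
  then have "((\<lambda>y. e * (\<phi> y - M)) has_derivative (\<lambda>h. e * (D\<phi> x \<bullet> h - 0))) (at x)"
    by (intro derivative_intros) auto
  then show "((\<lambda>y. e * (\<phi> y - M)) has_derivative (\<lambda>h. e *\<^sub>R D\<phi> x \<bullet> h)) (at x)"
    by simp
  have "(D\<phi> has_derivative (\<lambda>h. D2\<phi> x *v h)) (at x)" using assms unfolding C2_test_def by blast
  then have "((\<lambda>y. e *\<^sub>R D\<phi> y) has_derivative (\<lambda>h. e *\<^sub>R (D2\<phi> x *v h))) (at x)"
    by (intro derivative_intros) auto
  then show "((\<lambda>y. e *\<^sub>R D\<phi> y) has_derivative (\<lambda>h. e *\<^sub>R D2\<phi> x *v h)) (at x)"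
    by (simp add: scaleR_matrix_vector_assoc)
next
  show "continuous_on UNIV (\<lambda>y. e *\<^sub>R D2\<phi> y)"
    using assms unfolding C2_test_def by (intro continuous_intros) auto
qed

lemma Ffin_all:
  assumes a_sym: "\<forall>x \<alpha>. symmetric_mat (a x \<alpha>)"
    and F_finite: "\<forall>x t p X. symmetric_mat X \<longrightarrow>
        bdd_below (range (\<lambda>\<alpha>. - trace (a x \<alpha> ** X) - b x \<alpha> \<bullet> p + c x \<alpha> * t))"
  shows "bdd_below (range (\<lambda>\<alpha>. - trace (a x \<alpha> ** X) - b x \<alpha> \<bullet> p + c x \<alpha> * t))"
proof -
  have eq: "trace (a x \<alpha> ** X) = trace (a x \<alpha> ** ((1/2) *\<^sub>R (X + transpose X)))" for \<alpha>
    using a_sym trace_sym by blast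
  have "bdd_below (range (\<lambda>\<alpha>. - trace (a x \<alpha> ** ((1/2) *\<^sub>R (X + transpose X))) - b x \<alpha> \<bullet> p + c x \<alpha> * t))"
    by (rule F_finite[rule_format, OF sym_half])
  then show ?thesis by (simp only: eq)
qed

lemma lsc_aff:
  assumes "lsc_on UNIV w" "\<epsilon> > 0"
  shows "lsc_on S (\<lambda>x. M + \<epsilon> * w x)"
  unfolding lsc_on_def
proof (intro ballI allI impI)
  fix x and d :: real assume xS: "x \<in> S" and d: "d > 0"
  have de: "d / \<epsilon> > 0" using d assms(2) by simp
  have "\<forall>x\<in>S. \<forall>e>0. eventually (\<lambda>y. w x - e < w y) (at x within S)"
    using lsc_sub[OF assms(1), of S] unfolding lsc_on_def .
  then have "eventually (\<lambda>y. w x - d / \<epsilon> < w y) (at x within S)"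
    using xS de by blast
  then show "\<forall>\<^sub>F y in at x within S. M + \<epsilon> * w x - d < M + \<epsilon> * w y"
  proof (rule eventually_mono)
    fix y assume "w x - d / \<epsilon> < w y"
    then have "\<epsilon> * (w x - d / \<epsilon>) < \<epsilon> * w y" using assms(2) by (rule mult_strict_left_mono)
    moreover have "\<epsilon> * (w x - d / \<epsilon>) = \<epsilon> * w x - d" using assms(2) by (simp add: right_diff_distrib)
    ultimately show "M + \<epsilon> * w x - d < M + \<epsilon> * w y" by simp
  qed
qed

lemma super_scaled:
  fixes a :: "real^'n \<Rightarrow> 'a \<Rightarrow> real^'n^'n"
  assumes a_sym: "\<forall>x \<alpha>. symmetric_mat (a x \<alpha>)"
    and F_finite: "\<forall>x t p X. symmetric_mat X \<longrightarrow>
        bdd_below (range (\<lambda>\<alpha>. - trace (a x \<alpha> ** X) - b x \<alpha> \<bullet> p + c x \<alpha> * t))"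
    and cM: "\<forall>x \<alpha>. c x \<alpha> * M \<ge> 0"
    and e: "\<epsilon> > 0"
    and \<Omega>: "open \<Omega>" "\<Omega> \<subseteq> {x. norm x > R}"
    and ws: "visc_super a b c {x. norm x > R} w" "lsc_on UNIV w"
  shows "visc_super a b c \<Omega> (\<lambda>x. M + \<epsilon> * w x)"
  unfolding visc_super_def
proof (intro conjI ballI allI impI)
  show "lsc_on \<Omega> (\<lambda>x. M + \<epsilon> * w x)" by (rule lsc_aff[OF ws(2) e])
  fix x0 \<phi> D\<phi> D2\<phi>
  assume x0: "x0 \<in> \<Omega>" and H: "C2_test \<phi> D\<phi> D2\<phi> \<and> (\<exists>r>0. \<forall>y\<in>\<Omega> \<inter> ball x0 r. M + \<epsilon> * w y - \<phi> y \<ge> M + \<epsilon> * w x0 - \<phi> x0)"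
  then obtain r where r: "r > 0" "\<forall>y\<in>\<Omega> \<inter> ball x0 r. M + \<epsilon> * w y - \<phi> y \<ge> M + \<epsilon> * w x0 - \<phi> x0" by blast
  obtain r' where r': "r' > 0" "ball x0 r' \<subseteq> \<Omega>" using \<Omega>(1) x0 open_contains_ball by blast
  define \<psi> where "\<psi> = (\<lambda>y. (1/\<epsilon>) * (\<phi> y - M))"
  have C2: "C2_test \<psi> (\<lambda>y. (1/\<epsilon>) *\<^sub>R D\<phi> y) (\<lambda>y. (1/\<epsilon>) *\<^sub>R D2\<phi> y)"
    unfolding \<psi>_def by (rule C2_scale[OF conjunct1[OF H]])
  have "\<forall>y\<in>{x. norm x > R} \<inter> ball x0 (min r r'). w y - \<psi> y \<ge> w x0 - \<psi> x0"
  proof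
    fix y assume "y \<in> {x. norm x > R} \<inter> ball x0 (min r r')"
    then have "y \<in> \<Omega> \<inter> ball x0 r" using r' by auto
    then have "M + \<epsilon> * w y - \<phi> y \<ge> M + \<epsilon> * w x0 - \<phi> x0" using r by blast
    then have "(1/\<epsilon>) * (M + \<epsilon> * w y - \<phi> y) \<ge> (1/\<epsilon>) * (M + \<epsilon> * w x0 - \<phi> x0)"
      using e by (intro mult_left_mono) auto
    then show "w y - \<psi> y \<ge> w x0 - \<psi> x0" using e unfolding \<psi>_def by (simp add: field_simps)
  qed
  moreover have "min r r' > 0" using r r' by simp
  moreover have "x0 \<in> {x. norm x > R}" using x0 \<Omega>(2) by auto
  ultimately have rex: "\<exists>r>0. \<forall>y\<in>{x. norm x > R} \<inter> ball x0 r. w y - \<psi> y \<ge> w x0 - \<psi> x0"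
    and xin: "x0 \<in> {x. norm x > R}" by blast+
  have all: "\<forall>x0\<in>{x. norm x > R}. \<forall>\<phi> D\<phi> D2\<phi>. C2_test \<phi> D\<phi> D2\<phi> \<and>
        (\<exists>r>0. \<forall>y\<in>{x. norm x > R} \<inter> ball x0 r. w y - \<phi> y \<ge> w x0 - \<phi> x0)
        \<longrightarrow> Fop a b c x0 (w x0) (D\<phi> x0) (D2\<phi> x0) \<ge> 0"
    using ws(1) unfolding visc_super_def by (rule conjunct2)
  have G0: "Fop a b c x0 (w x0) ((1/\<epsilon>) *\<^sub>R D\<phi> x0) ((1/\<epsilon>) *\<^sub>R D2\<phi> x0) \<ge> 0"
    using all[rule_format, OF xin, of \<psi> "\<lambda>y. (1/\<epsilon>) *\<^sub>R D\<phi> y" "\<lambda>y. (1/\<epsilon>) *\<^sub>R D2\<phi> y"] C2 rex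
    by simp
  define g where "g = (\<lambda>\<alpha>. - trace (a x0 \<alpha> ** ((1/\<epsilon>) *\<^sub>R D2\<phi> x0)) - b x0 \<alpha> \<bullet> ((1/\<epsilon>) *\<^sub>R D\<phi> x0) + c x0 \<alpha> * w x0)"
  have bdd: "bdd_below (range g)" unfolding g_def by (rule Ffin_all[OF a_sym F_finite])
  have g0: "g \<alpha> \<ge> 0" for \<alpha>
  proof -
    have "Inf (range g) \<le> g \<alpha>" using bdd by (simp add: cINF_lower)
    moreover have "Inf (range g) \<ge> 0" using G0 unfolding Fop_def g_def by simp
    ultimately show ?thesis by simp
  qed
  have "- trace (a x0 \<alpha> ** D2\<phi> x0) - b x0 \<alpha> \<bullet> D\<phi> x0 + c x0 \<alpha> * (M + \<epsilon> * w x0) \<ge> 0" for \<alpha>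
  proof -
    have "- trace (a x0 \<alpha> ** D2\<phi> x0) - b x0 \<alpha> \<bullet> D\<phi> x0 + c x0 \<alpha> * (M + \<epsilon> * w x0)
          = \<epsilon> * g \<alpha> + c x0 \<alpha> * M"
    proof -
      have t1: "trace (a x0 \<alpha> ** ((1/\<epsilon>) *\<^sub>R D2\<phi> x0)) = (1/\<epsilon>) * trace (a x0 \<alpha> ** D2\<phi> x0)"
        by (rule trace_scale)
      have t2: "b x0 \<alpha> \<bullet> ((1/\<epsilon>) *\<^sub>R D\<phi> x0) = (1/\<epsilon>) * (b x0 \<alpha> \<bullet> D\<phi> x0)"
        by (rule inner_scaleR_right)
      have "\<epsilon> * g \<alpha> = \<epsilon> * (- ((1/\<epsilon>) * trace (a x0 \<alpha> ** D2\<phi> x0)) - (1/\<epsilon>) * (b x0 \<alpha> \<bullet> D\<phi> x0) + c x0 \<alpha> * w x0)"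
        unfolding g_def t1 t2 by (rule refl)
      also have "\<dots> = - trace (a x0 \<alpha> ** D2\<phi> x0) - b x0 \<alpha> \<bullet> D\<phi> x0 + \<epsilon> * c x0 \<alpha> * w x0"
        using e by (simp add: algebra_simps)
      finally show ?thesis by (simp add: algebra_simps)
    qed
    then show ?thesis using g0[of \<alpha>] cM e by simp
  qed
  then show "Fop a b c x0 (M + \<epsilon> * w x0) (D\<phi> x0) (D2\<phi> x0) \<ge> 0"
    unfolding Fop_def by (intro cINF_greatest) (simp_all only: UNIV_not_empty not_False_eq_True)
qed

theorem theorem2p1:
  fixes a :: "real^'n \<Rightarrow> 'a::metric_space \<Rightarrow> real^'n^'n"
    and b :: "real^'n \<Rightarrow> 'a \<Rightarrow> real^'n"
    and c :: "real^'n \<Rightarrow> 'a \<Rightarrow> real"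
    and u w :: "real^'n \<Rightarrow> real"
    and R\<^sub>o :: real
  assumes a_sym: "\<forall>x \<alpha>. symmetric_mat (a x \<alpha>)"
    and a_cont: "continuous_on UNIV (\<lambda>(x, \<alpha>). a x \<alpha>)"
    and b_cont: "continuous_on UNIV (\<lambda>(x, \<alpha>). b x \<alpha>)"
    and c_cont: "continuous_on UNIV (\<lambda>(x, \<alpha>). c x \<alpha>)"
    and F_finite: "\<forall>x t p X. symmetric_mat X \<longrightarrow>
        bdd_below (range (\<lambda>\<alpha>. - trace (a x \<alpha> ** X) - b x \<alpha> \<bullet> p + c x \<alpha> * t))"
    and F_cont: "continuous_on (UNIV \<times> UNIV \<times> UNIV \<times> {X. symmetric_mat X})
        (\<lambda>(x, t, p, X). Fop a b c x t p X)"
    and c_nonneg: "\<forall>x \<alpha>. c x \<alpha> \<ge> 0"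
    and comparison: "\<forall>\<Omega> u v. open \<Omega> \<and> bounded \<Omega> \<and>
        visc_sub a b c \<Omega> u \<and> visc_super a b c \<Omega> v \<and>
        usc_on (closure \<Omega>) u \<and> lsc_on (closure \<Omega>) v \<and>
        (\<forall>x\<in>frontier \<Omega>. u x \<le> v x) \<longrightarrow> (\<forall>x\<in>\<Omega>. u x \<le> v x)"
    and strong_max: "\<forall>u. visc_sub a b c UNIV u \<and>
        (\<exists>x0. u x0 \<ge> 0 \<and> (\<forall>x. u x \<le> u x0)) \<longrightarrow> (\<exists>k. \<forall>x. u x = k)"
    and R_nonneg: "R\<^sub>o \<ge> 0"
    and w_lsc: "lsc_on UNIV w"
    and w_super: "visc_super a b c {x. norm x > R\<^sub>o} w"
    and w_infty: "filterlim w at_top at_infinity"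
    and u_growth: "Limsup at_infinity (\<lambda>x. ereal (u x / w x)) \<le> 0"
    and u_usc: "usc_on UNIV u"
    and u_sub: "visc_sub a b c UNIV u"
    and alt: "(\<forall>x. u x \<ge> 0) \<or> (\<forall>x \<alpha>. c x \<alpha> = 0)"
  shows "\<exists>k. \<forall>x. u x = k"
proof -
  have "eventually (\<lambda>x. 1 \<le> w x) at_infinity" using w_infty by (simp add: filterlim_at_top)
  then obtain B where B: "\<forall>x. B \<le> norm x \<longrightarrow> 1 \<le> w x" unfolding eventually_at_infinity by blast
  define R where "R = max B R\<^sub>o"
  have wR: "norm x \<ge> R \<Longrightarrow> w x \<ge> 1" for x using B unfolding R_def by auto
  obtain x0 where x0: "x0 \<in> cball 0 R" "\<forall>x\<in>cball 0 R. u x \<le> u x0"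
    using usc_max[OF u_usc, of "cball 0 R"] R_nonneg unfolding R_def by auto
  define M where "M = u x0"
  have cM: "\<forall>x \<alpha>. c x \<alpha> * M \<ge> 0"
    using alt c_nonneg unfolding M_def by auto
  have key: "u x \<le> M + \<epsilon> * w x" if e: "\<epsilon> > 0" and xR: "norm x \<ge> R" for \<epsilon> x
  proof -
    have "Limsup at_infinity (\<lambda>x. ereal (u x / w x)) < ereal (\<epsilon>/2)"
      using u_growth e by (meson ereal_less(2) half_gt_zero le_less_trans)
    then have ev1: "eventually (\<lambda>x. ereal (u x / w x) < ereal (\<epsilon>/2)) at_infinity"
      by (rule Limsup_lessD)
    have ev2: "eventually (\<lambda>x. 2 * \<bar>M\<bar> / \<epsilon> + 1 \<le> w x) at_infinity"
      using w_infty by (simp add: filterlim_at_top)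
    obtain S where S: "\<forall>x. S \<le> norm x \<longrightarrow> ereal (u x / w x) < ereal (\<epsilon>/2) \<and> 2 * \<bar>M\<bar> / \<epsilon> + 1 \<le> w x"
      using eventually_conj[OF ev1 ev2] unfolding eventually_at_infinity by blast
    have out: "u y \<le> M + \<epsilon> * w y" if "S \<le> norm y" for y
    proof -
      have h1: "u y / w y < \<epsilon>/2" and h2: "2 * \<bar>M\<bar> / \<epsilon> + 1 \<le> w y" using S that by auto
      have wp: "w y > 0" using h2 e by (smt (verit) divide_nonneg_pos)
      have h0: "u y < \<epsilon>/2 * w y" using h1 wp by (simp add: divide_less_eq)
      have "\<epsilon> * (2 * \<bar>M\<bar> / \<epsilon> + 1) \<le> \<epsilon> * w y" using h2 e by (intro mult_left_mono) auto
      moreover have "\<epsilon> * (2 * \<bar>M\<bar> / \<epsilon> + 1) = 2 * \<bar>M\<bar> + \<epsilon>" using e by (simp add: field_simps)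
      ultimately have h3: "2 * \<bar>M\<bar> + \<epsilon> \<le> \<epsilon> * w y" by simp
      have "\<epsilon>/2 * w y = (\<epsilon> * w y) / 2" by simp
      then have h4: "u y < (\<epsilon> * w y) / 2" using h0 by simp
      show ?thesis using h4 h3 abs_ge_minus_self[of M] e by linarith
    qed
    define R' where "R' = max S R + 1"
    define \<Omega> where "\<Omega> = {x::real^'n. R < norm x \<and> norm x < R'}"
    have op: "open \<Omega>" unfolding \<Omega>_def by (intro open_Collect_conj open_Collect_less continuous_intros)
    have bd: "bounded \<Omega>" unfolding \<Omega>_def by (rule bounded_subset[of "cball 0 R'"]) auto
    have cl: "closure \<Omega> \<subseteq> {x. R \<le> norm x \<and> norm x \<le> R'}"
      unfolding \<Omega>_def by (intro closure_minimal closed_Collect_conj closed_Collect_le continuous_intros) auto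
    have inner: "u y \<le> M + \<epsilon> * w y" if "norm y = R" for y
    proof -
      have "u y \<le> M" using x0 that unfolding M_def by auto
      moreover have "w y \<ge> 1" using wR that by simp
      ultimately show ?thesis using e by (smt (verit) mult_nonneg_nonneg)
    qed
    have fr: "\<forall>y\<in>frontier \<Omega>. u y \<le> M + \<epsilon> * w y"
    proof
      fix y assume "y \<in> frontier \<Omega>"
      then have "y \<in> closure \<Omega>" "y \<notin> \<Omega>" using op by (auto simp: frontier_def interior_open)
      then have "norm y = R \<or> norm y = R'" using cl unfolding \<Omega>_def by auto
      then show "u y \<le> M + \<epsilon> * w y"
      proof
        assume "norm y = R" then show ?thesis by (rule inner)
      next
        assume "norm y = R'" then have "S \<le> norm y" unfolding R'_def by simp
        then show ?thesis by (rule out)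
      qed
    qed
    have sub: "visc_sub a b c \<Omega> u" using sub_restrict[OF u_sub op] .
    have sup: "visc_super a b c \<Omega> (\<lambda>x. M + \<epsilon> * w x)"
      by (rule super_scaled[OF a_sym F_finite cM e op _ w_super w_lsc]) (auto simp: \<Omega>_def R_def)
    have "open \<Omega> \<and> bounded \<Omega> \<and> visc_sub a b c \<Omega> u \<and> visc_super a b c \<Omega> (\<lambda>x. M + \<epsilon> * w x) \<and>
        usc_on (closure \<Omega>) u \<and> lsc_on (closure \<Omega>) (\<lambda>x. M + \<epsilon> * w x) \<and>
        (\<forall>x\<in>frontier \<Omega>. u x \<le> M + \<epsilon> * w x)"
      using op bd sub sup fr usc_sub[OF u_usc] lsc_aff[OF w_lsc e] by (intro conjI)
    then have inside: "\<forall>y\<in>\<Omega>. u y \<le> M + \<epsilon> * w y"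
      by (rule mp[OF comparison[THEN spec[of _ \<Omega>], THEN spec[of _ u], THEN spec[of _ "\<lambda>x. M + \<epsilon> * w x"]]])
    show ?thesis
    proof (cases "norm x = R")
      case True then show ?thesis using inner by blast
    next
      case False
      show ?thesis
      proof (cases "norm x < R'")
        case True then show ?thesis using inside False xR unfolding \<Omega>_def by auto
      next
        case False then show ?thesis using out unfolding R'_def by auto
      qed
    qed
  qed
  have le: "u x \<le> M" for x
  proof (cases "norm x \<le> R")
    case True then show ?thesis using x0 unfolding M_def by auto
  next
    case False
    then have w1: "w x \<ge> 1" using wR by simp
    show ?thesis
    proof (rule ccontr)
      assume "\<not> u x \<le> M"
      then have p: "(u x - M) / (2 * w x) > 0" using w1 by simp
      have "u x \<le> M + (u x - M) / (2 * w x) * w x" using False by (intro key[OF p]) simp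
      also have "\<dots> = M + (u x - M) / 2" using w1 by simp
      finally have "u x \<le> M + (u x - M) / 2" .
      then have "2 * u x \<le> 2 * M + (u x - M)" by (simp add: field_simps)
      then show False using \<open>\<not> u x \<le> M\<close> by linarith
    qed
  qed
  show ?thesis
  proof (cases "\<forall>x. u x \<ge> 0")
    case True
    have "visc_sub a b c UNIV u \<and> (\<exists>x0. u x0 \<ge> 0 \<and> (\<forall>x. u x \<le> u x0))"
      using True u_sub le unfolding M_def by blast
    then show ?thesis by (rule strong_max[rule_format])
  next
    case False
    then have c0: "\<forall>x \<alpha>. c x \<alpha> = 0" using alt by blast
    have "visc_sub a b c UNIV (\<lambda>x. u x - M) \<and> (\<exists>x1. (\<lambda>x. u x - M) x1 \<ge> 0 \<and> (\<forall>x. (\<lambda>x. u x - M) x \<le> (\<lambda>x. u x - M) x1))"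
      using sub_shift[OF c0 u_sub] le unfolding M_def by auto
    then have "\<exists>k. \<forall>x. u x - M = k"
      by (rule strong_max[rule_format])
    then show ?thesis by (metis add.commute diff_add_cancel)
  qed
qed

end
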